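(* Let $\Omega$ be a Polish space, $m$ a finite positive Borel measure on $\Omega$ and $f$ an entropy function. Then the internal energy $H_{f,m}\colon\mathcal M(\Omega)\to\mathbb R\cup\{+\infty\}$ is totally substitutable.
   Context: An entropy function is a proper, convex, lower semicontinuous $f\colon[0,\infty)\to[0,\infty]$ with $f(s)/s\to+\infty$ as $s\to\infty$. $\mathcal M(\Omega)$ is the Banach lattice of finite signed Borel measures (setwise order, total variation norm). $H_{f,m}(\mu)=\int_\Omega f(d\mu/dm)\,dm$ if $\mu$ is positive and absolutely continuous w.r.t. $m$, and $+\infty$ otherwise (if $m=0$, $H_{f,0}(\mu)=0$ for $\mu=0$ and $+\infty$ otherwise). On a Banach lattice $Y$, $[a,b]=\{y:a\leq y\leq b\}$; $H\colon Y\to\mathbb R\cup\{+\infty\}$ is totally substitutable if for all $\mu_1,\mu_2\in Y$ and all $\mu_1',\mu_2'\in[\mu_1\wedge\mu_2,\mu_1\vee\mu_2]$ with $\mu_1'+\mu_2'=\mu_1+\mu_2$ one has $H(\mu_1')+H(\mu_2')\leq H(\mu_1)+H(\mu_2)$. *)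

theory Defs
  imports "HOL-Analysis.Analysis"
begin

text \<open>Finite signed Borel measures on a Polish space, represented as real-valued
  set functions that are countably additive on the Borel sets (values on
  non-Borel sets are irrelevant: all comparisons below are on Borel sets).\<close>

definition finite_signed_measure :: "('a::topological_space set \<Rightarrow> real) \<Rightarrow> bool" where
  "finite_signed_measure \<mu> \<longleftrightarrow>
     \<mu> {} = 0 \<and>
     (\<forall>A::nat \<Rightarrow> 'a set. range A \<subseteq> sets borel \<longrightarrow> disjoint_family A \<longrightarrow>
        (\<lambda>n. \<mu> (A n)) sums \<mu> (\<Union>n. A n))"

definition sm_le :: "('a::topological_space set \<Rightarrow> real) \<Rightarrow> ('a set \<Rightarrow> real) \<Rightarrow> bool" where
  "sm_le \<mu> \<nu> \<longleftrightarrow> (\<forall>A\<in>sets borel. \<mu> A \<le> \<nu> A)"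

definition sm_inf :: "('a::topological_space set \<Rightarrow> real) \<Rightarrow> ('a set \<Rightarrow> real) \<Rightarrow> 'a set \<Rightarrow> real" where
  "sm_inf \<mu> \<nu> A = Inf {\<mu> B + \<nu> (A - B) | B. B \<in> sets borel \<and> B \<subseteq> A}"

definition sm_sup :: "('a::topological_space set \<Rightarrow> real) \<Rightarrow> ('a set \<Rightarrow> real) \<Rightarrow> 'a set \<Rightarrow> real" where
  "sm_sup \<mu> \<nu> A = Sup {\<mu> B + \<nu> (A - B) | B. B \<in> sets borel \<and> B \<subseteq> A}"

definition sm_measure :: "('a::topological_space set \<Rightarrow> real) \<Rightarrow> 'a measure" where
  "sm_measure \<mu> = measure_of UNIV (sets borel) (\<lambda>A. ennreal (\<mu> A))"

text \<open>Entropy function f : [0,\<infinity>) \<rightarrow> [0,\<infinity>]: proper, convex, lower semicontinuous,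
  superlinear. Values of f on negative reals are irrelevant.\<close>
definition entropy_function :: "(real \<Rightarrow> ereal) \<Rightarrow> bool" where
  "entropy_function f \<longleftrightarrow>
     (\<forall>s\<ge>0. 0 \<le> f s) \<and>
     (\<exists>s\<ge>0. f s < \<infinity>) \<and>
     (\<forall>x\<ge>0. \<forall>y\<ge>0. \<forall>t\<in>{0..1}.
        f ((1 - t) * x + t * y) \<le> ereal (1 - t) * f x + ereal t * f y) \<and>
     (\<forall>s\<ge>0. \<forall>X::nat \<Rightarrow> real. (\<forall>n. 0 \<le> X n) \<longrightarrow> X \<longlonglongrightarrow> s \<longrightarrow>
        f s \<le> liminf (\<lambda>n. f (X n))) \<and>
     ((\<lambda>s. f s / ereal s) \<longlongrightarrow> \<infinity>) at_top"

definition H_fm :: "(real \<Rightarrow> ereal) \<Rightarrow> 'a::topological_space measure \<Rightarrow> ('a set \<Rightarrow> real) \<Rightarrow> ereal" where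
  "H_fm f m \<mu> =
     (if (\<forall>A\<in>sets borel. 0 \<le> \<mu> A) \<and> (\<forall>A\<in>sets borel. emeasure m A = 0 \<longrightarrow> \<mu> A = 0)
      then enn2ereal (\<integral>\<^sup>+ x. e2ennreal (f (enn2real (RN_deriv m (sm_measure \<mu>) x))) \<partial>m)
      else \<infinity>)"

definition totally_substitutable :: "(('a::topological_space set \<Rightarrow> real) \<Rightarrow> ereal) \<Rightarrow> bool" where
  "totally_substitutable H \<longleftrightarrow>
     (\<forall>\<mu>1 \<mu>2 \<mu>1' \<mu>2'.
        finite_signed_measure \<mu>1 \<and> finite_signed_measure \<mu>2 \<and>
        finite_signed_measure \<mu>1' \<and> finite_signed_measure \<mu>2' \<and>
        sm_le (sm_inf \<mu>1 \<mu>2) \<mu>1' \<and> sm_le \<mu>1' (sm_sup \<mu>1 \<mu>2) \<and>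
        sm_le (sm_inf \<mu>1 \<mu>2) \<mu>2' \<and> sm_le \<mu>2' (sm_sup \<mu>1 \<mu>2) \<and>
        (\<forall>A\<in>sets borel. \<mu>1' A + \<mu>2' A = \<mu>1 A + \<mu>2 A)
      \<longrightarrow> H \<mu>1' + H \<mu>2' \<le> H \<mu>1 + H \<mu>2)"

end

theory Submission
  imports Defs
begin

lemma entropy_meas:
  assumes "entropy_function f"
  shows "(\<lambda>s. f (max 0 s)) \<in> borel_measurable borel"
proof (rule borel_measurableI_le)
  fix c :: ereal
  have lsc: "\<And>s X. s \<ge> 0 \<Longrightarrow> (\<forall>n. 0 \<le> X n) \<Longrightarrow> X \<longlonglongrightarrow> s \<Longrightarrow> f s \<le> liminf (\<lambda>n. f (X n))"
    using assms unfolding entropy_function_def by blast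
  have "closed {x. f (max 0 x) \<le> c}"
    unfolding closed_sequential_limits
  proof (intro allI impI)
    fix x l assume h: "(\<forall>n. x n \<in> {x. f (max 0 x) \<le> c}) \<and> x \<longlonglongrightarrow> l"
    have t: "(\<lambda>n. max 0 (x n)) \<longlonglongrightarrow> max 0 l"
      using h by (intro tendsto_max) auto
    have "f (max 0 l) \<le> liminf (\<lambda>n. f (max 0 (x n)))"
      by (rule lsc[OF _ _ t]) auto
    also have "\<dots> \<le> limsup (\<lambda>n. f (max 0 (x n)))"
      by (rule Liminf_le_Limsup) simp
    also have "\<dots> \<le> c"
      using h by (intro Limsup_bounded) auto
    finally show "l \<in> {x. f (max 0 x) \<le> c}" by simp
  qed
  then show "{x \<in> space borel. f (max 0 x) \<le> c} \<in> sets borel"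
    by (simp add: borel_closed)
qed

lemma conv_pt:
  assumes "entropy_function f"
    and "0 \<le> a" "0 \<le> b" "0 \<le> c" "0 \<le> d" "c + d = a + b" "min a b \<le> c" "min a b \<le> d"
  shows "f c + f d \<le> f a + f b"
proof -
  have cvx: "\<And>x y t. x \<ge> 0 \<Longrightarrow> y \<ge> 0 \<Longrightarrow> t \<in> {0..1} \<Longrightarrow>
        f ((1 - t) * x + t * y) \<le> ereal (1 - t) * f x + ereal t * f y"
   and nn: "\<And>s. s \<ge> 0 \<Longrightarrow> 0 \<le> f s"
    using assms(1) unfolding entropy_function_def by blast+
  have main: "f c + f d \<le> f a + f b" if ab: "a \<le> b" "0 \<le> a" "0 \<le> b" "0 \<le> c" "0 \<le> d" "c + d = a + b" "a \<le> c" "a \<le> d"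
    for a b c d :: real
  proof (cases "a = b")
    case True
    then have "c = a" "d = a" using ab by auto
    then show ?thesis using True by simp
  next
    case False
    define t where "t = (c - a) / (b - a)"
    have t01: "t \<in> {0..1}" using ab False unfolding t_def by (auto simp: field_simps)
    have tt: "t * (b - a) = c - a" using False ab unfolding t_def by simp
    have c: "c = (1 - t) * a + t * b" using tt by (simp add: algebra_simps)
    have d: "d = (1 - (1 - t)) * a + (1 - t) * b" using c ab by (auto simp: algebra_simps)
    have t01': "1 - t \<in> {0..1}" using t01 by auto
    have fc: "f c \<le> ereal (1 - t) * f a + ereal t * f b" using cvx[OF ab(2,3) t01] c by simp
    have fd: "f d \<le> ereal (1 - (1 - t)) * f a + ereal (1 - t) * f b" using cvx[OF ab(2,3) t01'] d by simp
    show ?thesis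
    proof (cases "f a = \<infinity> \<or> f b = \<infinity>")
      case True
      then have "f a + f b = \<infinity>" using nn ab by auto
      then show ?thesis by (metis ereal_less_eq(1))
    next
      case False
      then obtain ra rb where ra: "f a = ereal ra" and rb: "f b = ereal rb"
        using nn[OF ab(2)] nn[OF ab(3)] by (cases "f a"; cases "f b") auto
      have "f c + f d \<le> (ereal (1 - t) * f a + ereal t * f b) + (ereal (1 - (1 - t)) * f a + ereal (1 - t) * f b)"
        using fc fd by (rule add_mono)
      also have "\<dots> = f a + f b" unfolding ra rb by (simp add: algebra_simps)
      finally show ?thesis .
    qed
  qed
  show ?thesis
  proof (cases "a \<le> b")
    case True
    then show ?thesis using main[of a b c d] assms by auto
  next
    case False
    then show ?thesis using main[of b a c d] assms by (auto simp: add_ac)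
  qed
qed


lemma sm_measure_sets:
  "sets (sm_measure \<mu>) = sets borel"
  unfolding sm_measure_def
  by (metis sets.sigma_sets_eq sets.space_closed sets_measure_of space_borel)

lemma sm_measure_emeasure:
  assumes fs: "finite_signed_measure \<mu>" and pos: "\<forall>A\<in>sets borel. 0 \<le> \<mu> A"
    and A: "A \<in> sets borel"
  shows "emeasure (sm_measure \<mu>) A = ennreal (\<mu> A)"
  unfolding sm_measure_def
proof (rule emeasure_measure_of_sigma[OF _ _ _ A])
  show "sigma_algebra UNIV (sets borel)"
    using sets.sigma_algebra_axioms[of borel] by simp
  show "positive (sets borel) (\<lambda>A. ennreal (\<mu> A))"
    using fs unfolding positive_def finite_signed_measure_def by simp
  show "countably_additive (sets borel) (\<lambda>A. ennreal (\<mu> A))"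
    unfolding countably_additive_def
  proof (intro allI impI)
    fix B :: "nat \<Rightarrow> 'a set"
    assume r: "range B \<subseteq> sets borel" and d: "disjoint_family B"
    then have s: "(\<lambda>n. \<mu> (B n)) sums \<mu> (\<Union>n. B n)"
      using fs unfolding finite_signed_measure_def by blast
    have "(\<Sum>i. ennreal (\<mu> (B i))) = ennreal (\<Sum>i. \<mu> (B i))"
      using r pos s by (intro suminf_ennreal2) (auto simp: sums_summable)
    also have "\<dots> = ennreal (\<mu> (\<Union>n. B n))" using s sums_unique by metis
    finally show "(\<Sum>i. ennreal (\<mu> (B i))) = ennreal (\<mu> (\<Union> (range B)))" by simp
  qed
qed

lemma dens:
  assumes m: "finite_measure m" "sets m = sets borel"
    and fs: "finite_signed_measure \<mu>" and pos: "\<forall>A\<in>sets borel. 0 \<le> \<mu> A"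
    and ac: "\<forall>A\<in>sets borel. emeasure m A = 0 \<longrightarrow> \<mu> A = 0"
  shows "RN_deriv m (sm_measure \<mu>) \<in> borel_measurable m"
    and "\<And>A. A \<in> sets m \<Longrightarrow> (\<integral>\<^sup>+x. RN_deriv m (sm_measure \<mu>) x * indicator A x \<partial>m) = ennreal (\<mu> A)"
proof -
  interpret finite_measure m by fact
  show meas: "RN_deriv m (sm_measure \<mu>) \<in> borel_measurable m" by simp
  have sN: "sets (sm_measure \<mu>) = sets m" using m sm_measure_sets by metis
  have acN: "absolutely_continuous m (sm_measure \<mu>)"
    unfolding absolutely_continuous_def
  proof
    fix A assume "A \<in> null_sets m"
    then have "A \<in> sets borel" "emeasure m A = 0" using m by auto
    then show "A \<in> null_sets (sm_measure \<mu>)"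
      using ac sm_measure_emeasure[OF fs pos] sm_measure_sets by (auto intro!: null_setsI)
  qed
  have D: "density m (RN_deriv m (sm_measure \<mu>)) = sm_measure \<mu>"
    by (rule density_RN_deriv[OF acN sN])
  fix A assume A: "A \<in> sets m"
  have "(\<integral>\<^sup>+x. RN_deriv m (sm_measure \<mu>) x * indicator A x \<partial>m) = emeasure (density m (RN_deriv m (sm_measure \<mu>))) A"
    using A meas by (simp add: emeasure_density)
  also have "\<dots> = ennreal (\<mu> A)" unfolding D using A m sm_measure_emeasure[OF fs pos] by simp
  finally show "(\<integral>\<^sup>+x. RN_deriv m (sm_measure \<mu>) x * indicator A x \<partial>m) = ennreal (\<mu> A)" .
qed

lemma AE_le_dens:
  assumes f: "f \<in> borel_measurable M" and g: "g \<in> borel_measurable M"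
    and fin: "(\<integral>\<^sup>+x. g x * indicator (space M) x \<partial>M) \<noteq> \<infinity>"
    and le: "\<And>A. A \<in> sets M \<Longrightarrow> (\<integral>\<^sup>+x. f x * indicator A x \<partial>M) \<le> (\<integral>\<^sup>+x. g x * indicator A x \<partial>M)"
  shows "AE x in M. f x \<le> (g x :: ennreal)"
proof -
  let ?P = "\<lambda>f A. \<integral>\<^sup>+ x. f x * indicator A x \<partial>M"
  have "integral\<^sup>N M g = ?P g (space M)"
    by (intro nn_integral_cong) (auto simp: indicator_def)
  then have g_fin: "integral\<^sup>N M g \<noteq> \<infinity>" using fin by simp
  let ?N = "{x\<in>space M. g x < f x}"
  have N: "?N \<in> sets M" using f g by simp
  have "?P g ?N \<le> integral\<^sup>N M g"
    by (intro nn_integral_mono_AE) (auto split: split_indicator)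
  then have Pg_fin: "?P g ?N \<noteq> \<infinity>" using g_fin by (auto simp: top_unique)
  have "?P (\<lambda>x. (f x - g x)) ?N = (\<integral>\<^sup>+x. f x * indicator ?N x - g x * indicator ?N x \<partial>M)"
    by (auto intro!: nn_integral_cong simp: indicator_def)
  also have "\<dots> = ?P f ?N - ?P g ?N"
  proof (rule nn_integral_diff)
    show "(\<lambda>x. f x * indicator ?N x) \<in> borel_measurable M" "(\<lambda>x. g x * indicator ?N x) \<in> borel_measurable M"
      using f g N by auto
    show "AE x in M. g x * indicator ?N x \<le> f x * indicator ?N x"
      by (auto split: split_indicator)
  qed fact
  also have "\<dots> = 0"
  proof -
    have "?P f ?N < top" using le[OF N] Pg_fin by (simp add: le_less_trans less_top)
    then show ?thesis using le[OF N] by (simp add: diff_eq_0_iff_ennreal)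
  qed
  finally show "AE x in M. f x \<le> g x"
    using f g nn_integral_PInf_AE[OF g g_fin]
    by (subst (asm) nn_integral_0_iff_AE)
       (auto split: split_indicator simp: not_less ennreal_minus_eq_0)
qed


lemma P_split:
  assumes u: "u \<in> borel_measurable M" and B: "B \<in> sets M" and A: "A \<in> sets M" and BA: "B \<subseteq> A"
  shows "(\<integral>\<^sup>+x. u x * indicator A x \<partial>M) = (\<integral>\<^sup>+x. u x * indicator B x \<partial>M) + (\<integral>\<^sup>+x. (u x :: ennreal) * indicator (A - B) x \<partial>M)"
proof -
  have "(\<integral>\<^sup>+x. u x * indicator A x \<partial>M) = (\<integral>\<^sup>+x. u x * indicator B x + u x * indicator (A - B) x \<partial>M)"
    using BA by (intro nn_integral_cong) (auto split: split_indicator)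
  also have "\<dots> = (\<integral>\<^sup>+x. u x * indicator B x \<partial>M) + (\<integral>\<^sup>+x. u x * indicator (A - B) x \<partial>M)"
    using u A B by (intro nn_integral_add) auto
  finally show ?thesis .
qed

lemma inf_ge:
  assumes sm: "sets M = sets borel"
    and u1: "u1 \<in> borel_measurable M" and u2: "u2 \<in> borel_measurable M"
    and d1: "\<And>A. A \<in> sets M \<Longrightarrow> (\<integral>\<^sup>+x. u1 x * indicator A x \<partial>M) = ennreal (\<mu>1 A)"
    and d2: "\<And>A. A \<in> sets M \<Longrightarrow> (\<integral>\<^sup>+x. u2 x * indicator A x \<partial>M) = ennreal (\<mu>2 A)"
    and p1: "\<forall>A\<in>sets borel. 0 \<le> \<mu>1 A" and p2: "\<forall>A\<in>sets borel. 0 \<le> \<mu>2 A"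
    and A: "A \<in> sets borel"
  shows "(\<integral>\<^sup>+x. min (u1 x) (u2 x) * indicator A x \<partial>M) \<le> ennreal (sm_inf \<mu>1 \<mu>2 A)"
    and "0 \<le> sm_inf \<mu>1 \<mu>2 A"
proof -
  define S where "S = {\<mu>1 B + \<mu>2 (A - B) | B. B \<in> sets borel \<and> B \<subseteq> A}"
  have inf: "sm_inf \<mu>1 \<mu>2 A = Inf S" unfolding sm_inf_def S_def by simp
  have Sne: "S \<noteq> {}" unfolding S_def by auto
  have mm: "(\<lambda>x. min (u1 x) (u2 x)) \<in> borel_measurable M" using u1 u2 by simp
  have key: "(\<integral>\<^sup>+x. min (u1 x) (u2 x) * indicator A x \<partial>M) \<le> ennreal s \<and> 0 \<le> s" if sS: "s \<in> S" for s
  proof -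
    obtain B where B: "B \<in> sets borel" "B \<subseteq> A" and s: "s = \<mu>1 B + \<mu>2 (A - B)"
      using sS unfolding S_def by auto
    have AB: "A - B \<in> sets borel" using A B by auto
    have "(\<integral>\<^sup>+x. min (u1 x) (u2 x) * indicator A x \<partial>M)
        = (\<integral>\<^sup>+x. min (u1 x) (u2 x) * indicator B x \<partial>M) + (\<integral>\<^sup>+x. min (u1 x) (u2 x) * indicator (A - B) x \<partial>M)"
      by (rule P_split[OF mm]) (use A B sm in auto)
    also have "\<dots> \<le> (\<integral>\<^sup>+x. u1 x * indicator B x \<partial>M) + (\<integral>\<^sup>+x. u2 x * indicator (A - B) x \<partial>M)"
      by (intro add_mono nn_integral_mono mult_right_mono) auto
    also have "\<dots> = ennreal (\<mu>1 B) + ennreal (\<mu>2 (A - B))" using d1 d2 B AB sm by simp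
    also have "\<dots> = ennreal s" using s p1 p2 B AB by (simp add: ennreal_plus)
    finally show ?thesis using s p1 p2 B AB by simp
  qed
  show "0 \<le> sm_inf \<mu>1 \<mu>2 A" unfolding inf using key Sne by (intro cInf_greatest) auto
  have "(\<integral>\<^sup>+x. min (u1 x) (u2 x) * indicator A x \<partial>M) \<le> (\<integral>\<^sup>+x. u1 x * indicator A x \<partial>M)"
    by (intro nn_integral_mono mult_right_mono) auto
  also have "\<dots> < top" using d1 A sm by simp
  finally obtain r where r: "r \<ge> 0" "(\<integral>\<^sup>+x. min (u1 x) (u2 x) * indicator A x \<partial>M) = ennreal r"
    using less_top_ennreal by blast
  have "r \<le> Inf S"
  proof (rule cInf_greatest[OF Sne])
    fix s assume "s \<in> S"
    then have k: "(\<integral>\<^sup>+x. min (u1 x) (u2 x) * indicator A x \<partial>M) \<le> ennreal s \<and> 0 \<le> s" by (rule key)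
    then have "ennreal r \<le> ennreal s" "0 \<le> s" using r(2) by simp_all
    then show "r \<le> s" using ennreal_le_iff by blast
  qed
  then show "(\<integral>\<^sup>+x. min (u1 x) (u2 x) * indicator A x \<partial>M) \<le> ennreal (sm_inf \<mu>1 \<mu>2 A)"
    unfolding inf r by (simp add: ennreal_leI)
qed

lemma sup_null:
  assumes sm: "sets M = sets borel"
    and a1: "\<forall>A\<in>sets borel. emeasure M A = 0 \<longrightarrow> \<mu>1 A = 0"
    and a2: "\<forall>A\<in>sets borel. emeasure M A = 0 \<longrightarrow> \<mu>2 A = 0"
    and A: "A \<in> sets borel" and N: "emeasure M A = 0"
  shows "sm_sup \<mu>1 \<mu>2 A = 0"
proof -
  have "{\<mu>1 B + \<mu>2 (A - B) | B. B \<in> sets borel \<and> B \<subseteq> A} = {0}"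
  proof (intro equalityI subsetI)
    fix s assume "s \<in> {\<mu>1 B + \<mu>2 (A - B) | B. B \<in> sets borel \<and> B \<subseteq> A}"
    then obtain B where B: "B \<in> sets borel" "B \<subseteq> A" and s: "s = \<mu>1 B + \<mu>2 (A - B)" by auto
    have "emeasure M B = 0" using emeasure_mono[of B A M] B A N sm by auto
    moreover have "emeasure M (A - B) = 0" using emeasure_mono[of "A - B" A M] B A N sm by auto
    ultimately show "s \<in> {0}" using a1 a2 B A s by auto
  next
    fix s assume "s \<in> {0::real}"
    then show "s \<in> {\<mu>1 B + \<mu>2 (A - B) | B. B \<in> sets borel \<and> B \<subseteq> A}"
      using a1 a2 A N by (auto intro!: exI[of _ "{}"])
  qed
  then show ?thesis unfolding sm_sup_def by simp
qed

lemma pt_enn: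
  assumes ef: "entropy_function f"
    and fin: "a \<noteq> top" "b \<noteq> top" "c \<noteq> top" "d \<noteq> top"
    and mc: "min a b \<le> c" and md: "min a b \<le> d" and sum: "c + d = a + (b::ennreal)"
  shows "e2ennreal (f (enn2real c)) + e2ennreal (f (enn2real d)) \<le> e2ennreal (f (enn2real a)) + e2ennreal (f (enn2real b))"
proof -
  have nn: "\<And>s. s \<ge> 0 \<Longrightarrow> 0 \<le> f s" using ef unfolding entropy_function_def by blast
  have s': "enn2real c + enn2real d = enn2real a + enn2real b"
    using sum fin by (metis enn2real_plus top.not_eq_extremum)
  have mle: "min (enn2real a) (enn2real b) \<le> enn2real x" if "min a b \<le> x" "x \<noteq> top" for x
  proof (cases "a \<le> b")
    case True
    then have "a \<le> x" using that by (simp add: min_def)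
    then have "enn2real a \<le> enn2real x" using that by (simp add: enn2real_mono top.not_eq_extremum)
    then show ?thesis by simp
  next
    case False
    then have "b \<le> x" using that by (simp add: min_def)
    then have "enn2real b \<le> enn2real x" using that by (simp add: enn2real_mono top.not_eq_extremum)
    then show ?thesis by simp
  qed
  have ineq: "f (enn2real c) + f (enn2real d) \<le> f (enn2real a) + f (enn2real b)"
    by (rule conv_pt[OF ef]) (use s' mle[OF mc fin(3)] mle[OF md fin(4)] in auto)
  have "e2ennreal (f (enn2real c)) + e2ennreal (f (enn2real d)) = e2ennreal (f (enn2real c) + f (enn2real d))"
    using nn by (intro plus_ennreal.abs_eq) (auto simp: eq_onp_def)
  also have "\<dots> \<le> e2ennreal (f (enn2real a) + f (enn2real b))" using ineq by (rule e2ennreal_mono)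
  also have "\<dots> = e2ennreal (f (enn2real a)) + e2ennreal (f (enn2real b))"
    using nn by (intro plus_ennreal.abs_eq[symmetric]) (auto simp: eq_onp_def)
  finally show ?thesis .
qed


lemma P_add:
  assumes "u \<in> borel_measurable M" "v \<in> borel_measurable M" "A \<in> sets M"
  shows "(\<integral>\<^sup>+x. (u x + v x) * indicator A x \<partial>M) = (\<integral>\<^sup>+x. u x * indicator A x \<partial>M) + (\<integral>\<^sup>+x. (v x :: ennreal) * indicator A x \<partial>M)"
  using assms by (simp add: distrib_right nn_integral_add)

lemma AE_fin:
  assumes "u \<in> borel_measurable M" "(\<integral>\<^sup>+x. u x * indicator (space M) x \<partial>M) = ennreal r"
  shows "AE x in M. u x \<noteq> top"
proof -
  have "integral\<^sup>N M u = (\<integral>\<^sup>+x. u x * indicator (space M) x \<partial>M)"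
    by (intro nn_integral_cong) (auto simp: indicator_def)
  then have "integral\<^sup>N M u \<noteq> \<infinity>" using assms by simp
  then show ?thesis using nn_integral_PInf_AE[OF assms(1)] by simp
qed

lemma F_meas:
  assumes ef: "entropy_function f" and u: "u \<in> borel_measurable M"
  shows "(\<lambda>x. e2ennreal (f (enn2real (u x)))) \<in> borel_measurable M"
proof -
  have "(\<lambda>x. e2ennreal (f (max 0 (enn2real (u x))))) \<in> borel_measurable M"
    by (rule measurable_compose[OF measurable_compose[OF borel_measurable_enn2real[OF u] entropy_meas[OF ef]] measurable_e2ennreal])
  moreover have "\<And>x. max 0 (enn2real (u x)) = enn2real (u x)" by (simp add: max_absorb2)
  ultimately show ?thesis by simp
qed

theorem lemma2p48:
  fixes m :: "'a::polish_space measure" and f :: "real \<Rightarrow> ereal"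
  assumes "sets m = sets borel" and "finite_measure m"
    and "entropy_function f"
  shows "totally_substitutable (H_fm f m)"
  unfolding totally_substitutable_def
proof (intro allI impI, elim conjE)
  fix \<mu>1 \<mu>2 \<mu>1' \<mu>2' :: "'a set \<Rightarrow> real"
  assume fs1: "finite_signed_measure \<mu>1" and fs2: "finite_signed_measure \<mu>2"
    and fs1': "finite_signed_measure \<mu>1'" and fs2': "finite_signed_measure \<mu>2'"
    and i1: "sm_le (sm_inf \<mu>1 \<mu>2) \<mu>1'" and s1: "sm_le \<mu>1' (sm_sup \<mu>1 \<mu>2)"
    and i2: "sm_le (sm_inf \<mu>1 \<mu>2) \<mu>2'" and s2: "sm_le \<mu>2' (sm_sup \<mu>1 \<mu>2)"
    and sum: "\<forall>A\<in>sets borel. \<mu>1' A + \<mu>2' A = \<mu>1 A + \<mu>2 A"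
  note sm = assms(1) and fm = assms(2) and ef = assms(3)
  let ?H = "H_fm f m"
  let ?C = "\<lambda>\<mu>. (\<forall>A\<in>sets borel. 0 \<le> \<mu> A) \<and> (\<forall>A\<in>sets borel. emeasure m A = 0 \<longrightarrow> \<mu> A = 0)"
  let ?F = "\<lambda>u x. e2ennreal (f (enn2real (u x)))"
  have Hnn: "\<And>\<mu>. 0 \<le> ?H \<mu>" unfolding H_fm_def by (simp add: enn2ereal_nonneg)
  show "?H \<mu>1' + ?H \<mu>2' \<le> ?H \<mu>1 + ?H \<mu>2"
  proof (cases "?C \<mu>1 \<and> ?C \<mu>2")
    case False
    then have "?H \<mu>1 = \<infinity> \<or> ?H \<mu>2 = \<infinity>" unfolding H_fm_def by auto
    then have "?H \<mu>1 + ?H \<mu>2 = \<infinity>" using Hnn by auto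
    then show ?thesis by (metis ereal_less_eq(1))
  next
    case True
    then have p1: "\<forall>A\<in>sets borel. 0 \<le> \<mu>1 A" and a1: "\<forall>A\<in>sets borel. emeasure m A = 0 \<longrightarrow> \<mu>1 A = 0"
      and p2: "\<forall>A\<in>sets borel. 0 \<le> \<mu>2 A" and a2: "\<forall>A\<in>sets borel. emeasure m A = 0 \<longrightarrow> \<mu>2 A = 0"
      by auto
    define u1 where "u1 = RN_deriv m (sm_measure \<mu>1)"
    define u2 where "u2 = RN_deriv m (sm_measure \<mu>2)"
    note D1 = dens[OF fm sm fs1 p1 a1, folded u1_def]
    note D2 = dens[OF fm sm fs2 p2 a2, folded u2_def]
    have infge: "\<And>A. A \<in> sets borel \<Longrightarrow> (\<integral>\<^sup>+x. min (u1 x) (u2 x) * indicator A x \<partial>m) \<le> ennreal (sm_inf \<mu>1 \<mu>2 A)"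
      by (rule inf_ge(1)[OF sm D1(1) D2(1) D1(2) D2(2) p1 p2])
    have inf0: "\<And>A. A \<in> sets borel \<Longrightarrow> 0 \<le> sm_inf \<mu>1 \<mu>2 A"
      by (rule inf_ge(2)[OF sm D1(1) D2(1) D1(2) D2(2) p1 p2])
    have supn: "\<And>A. A \<in> sets borel \<Longrightarrow> emeasure m A = 0 \<Longrightarrow> sm_sup \<mu>1 \<mu>2 A = 0"
      by (rule sup_null[OF sm a1 a2])
    have p1': "\<forall>A\<in>sets borel. 0 \<le> \<mu>1' A" using i1 inf0 unfolding sm_le_def by (meson order_trans)
    have p2': "\<forall>A\<in>sets borel. 0 \<le> \<mu>2' A" using i2 inf0 unfolding sm_le_def by (meson order_trans)
    have a1': "\<forall>A\<in>sets borel. emeasure m A = 0 \<longrightarrow> \<mu>1' A = 0"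
    proof (intro ballI impI)
      fix A assume A: "A \<in> sets borel" and N: "emeasure m A = 0"
      have "\<mu>1' A \<le> sm_sup \<mu>1 \<mu>2 A" using s1 A unfolding sm_le_def by blast
      also have "\<dots> = 0" using supn[OF A N] .
      finally show "\<mu>1' A = 0" using p1' A by (meson order_antisym)
    qed
    have a2': "\<forall>A\<in>sets borel. emeasure m A = 0 \<longrightarrow> \<mu>2' A = 0"
    proof (intro ballI impI)
      fix A assume A: "A \<in> sets borel" and N: "emeasure m A = 0"
      have "\<mu>2' A \<le> sm_sup \<mu>1 \<mu>2 A" using s2 A unfolding sm_le_def by blast
      also have "\<dots> = 0" using supn[OF A N] .
      finally show "\<mu>2' A = 0" using p2' A by (meson order_antisym)
    qed
    define u1' where "u1' = RN_deriv m (sm_measure \<mu>1')"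
    define u2' where "u2' = RN_deriv m (sm_measure \<mu>2')"
    note D1' = dens[OF fm sm fs1' p1' a1', folded u1'_def]
    note D2' = dens[OF fm sm fs2' p2' a2', folded u2'_def]
    have sp: "space m \<in> sets m" by simp
    have mm: "(\<lambda>x. min (u1 x) (u2 x)) \<in> borel_measurable m" using D1(1) D2(1) by simp
    have ae1: "AE x in m. min (u1 x) (u2 x) \<le> u1' x"
    proof (rule AE_le_dens[OF mm D1'(1)])
      show "(\<integral>\<^sup>+x. u1' x * indicator (space m) x \<partial>m) \<noteq> \<infinity>" using D1'(2)[OF sp] by simp
      fix A assume A: "A \<in> sets m"
      have "(\<integral>\<^sup>+x. min (u1 x) (u2 x) * indicator A x \<partial>m) \<le> ennreal (sm_inf \<mu>1 \<mu>2 A)"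
        using infge A sm by simp
      also have "\<dots> \<le> ennreal (\<mu>1' A)" using i1 A sm unfolding sm_le_def by (simp add: ennreal_leI)
      finally show "(\<integral>\<^sup>+x. min (u1 x) (u2 x) * indicator A x \<partial>m) \<le> (\<integral>\<^sup>+x. u1' x * indicator A x \<partial>m)"
        using D1'(2)[OF A] by simp
    qed
    have ae2: "AE x in m. min (u1 x) (u2 x) \<le> u2' x"
    proof (rule AE_le_dens[OF mm D2'(1)])
      show "(\<integral>\<^sup>+x. u2' x * indicator (space m) x \<partial>m) \<noteq> \<infinity>" using D2'(2)[OF sp] by simp
      fix A assume A: "A \<in> sets m"
      have "(\<integral>\<^sup>+x. min (u1 x) (u2 x) * indicator A x \<partial>m) \<le> ennreal (sm_inf \<mu>1 \<mu>2 A)"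
        using infge A sm by simp
      also have "\<dots> \<le> ennreal (\<mu>2' A)" using i2 A sm unfolding sm_le_def by (simp add: ennreal_leI)
      finally show "(\<integral>\<^sup>+x. min (u1 x) (u2 x) * indicator A x \<partial>m) \<le> (\<integral>\<^sup>+x. u2' x * indicator A x \<partial>m)"
        using D2'(2)[OF A] by simp
    qed
    have Psum: "(\<integral>\<^sup>+x. (u1' x + u2' x) * indicator A x \<partial>m) = (\<integral>\<^sup>+x. (u1 x + u2 x) * indicator A x \<partial>m)"
      if A: "A \<in> sets m" for A
    proof -
      have "(\<integral>\<^sup>+x. (u1' x + u2' x) * indicator A x \<partial>m) = ennreal (\<mu>1' A) + ennreal (\<mu>2' A)"
        using P_add[OF D1'(1) D2'(1) A] D1'(2)[OF A] D2'(2)[OF A] by simp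
      also have "\<dots> = ennreal (\<mu>1' A + \<mu>2' A)" using p1' p2' A sm by (simp add: ennreal_plus)
      also have "\<dots> = ennreal (\<mu>1 A + \<mu>2 A)" using sum A sm by simp
      also have "\<dots> = ennreal (\<mu>1 A) + ennreal (\<mu>2 A)" using p1 p2 A sm by (simp add: ennreal_plus)
      also have "\<dots> = (\<integral>\<^sup>+x. (u1 x + u2 x) * indicator A x \<partial>m)"
        using P_add[OF D1(1) D2(1) A] D1(2)[OF A] D2(2)[OF A] by simp
      finally show ?thesis .
    qed
    have s12: "(\<lambda>x. u1 x + u2 x) \<in> borel_measurable m" using D1(1) D2(1) by simp
    have s12': "(\<lambda>x. u1' x + u2' x) \<in> borel_measurable m" using D1'(1) D2'(1) by simp
    have fin12: "(\<integral>\<^sup>+x. (u1 x + u2 x) * indicator (space m) x \<partial>m) \<noteq> \<infinity>"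
      using P_add[OF D1(1) D2(1) sp] D1(2)[OF sp] D2(2)[OF sp] by simp
    have fin12': "(\<integral>\<^sup>+x. (u1' x + u2' x) * indicator (space m) x \<partial>m) \<noteq> \<infinity>"
      using Psum[OF sp] fin12 by simp
    have aes1: "AE x in m. u1' x + u2' x \<le> u1 x + u2 x"
      by (rule AE_le_dens[OF s12' s12 fin12]) (simp add: Psum)
    have aes2: "AE x in m. u1 x + u2 x \<le> u1' x + u2' x"
      by (rule AE_le_dens[OF s12 s12' fin12']) (simp add: Psum)
    have f1: "AE x in m. u1 x \<noteq> top" by (rule AE_fin[OF D1(1) D1(2)[OF sp]])
    have f2: "AE x in m. u2 x \<noteq> top" by (rule AE_fin[OF D2(1) D2(2)[OF sp]])
    have f1': "AE x in m. u1' x \<noteq> top" by (rule AE_fin[OF D1'(1) D1'(2)[OF sp]])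
    have f2': "AE x in m. u2' x \<noteq> top" by (rule AE_fin[OF D2'(1) D2'(2)[OF sp]])
    have pt: "AE x in m. ?F u1' x + ?F u2' x \<le> ?F u1 x + ?F u2 x"
      using ae1 ae2 aes1 aes2 f1 f2 f1' f2'
    proof eventually_elim
      case (elim x)
      show ?case by (rule pt_enn[OF ef elim(5,6,7,8,1,2) order_antisym[OF elim(3,4)]])
    qed
    have M1: "?F u1 \<in> borel_measurable m" by (rule F_meas[OF ef D1(1)])
    have M2: "?F u2 \<in> borel_measurable m" by (rule F_meas[OF ef D2(1)])
    have M1': "?F u1' \<in> borel_measurable m" by (rule F_meas[OF ef D1'(1)])
    have M2': "?F u2' \<in> borel_measurable m" by (rule F_meas[OF ef D2'(1)])
    have H1: "?H \<mu>1 = enn2ereal (integral\<^sup>N m (?F u1))" using p1 a1 unfolding H_fm_def u1_def by simp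
    have H2: "?H \<mu>2 = enn2ereal (integral\<^sup>N m (?F u2))" using p2 a2 unfolding H_fm_def u2_def by simp
    have H1': "?H \<mu>1' = enn2ereal (integral\<^sup>N m (?F u1'))" using p1' a1' unfolding H_fm_def u1'_def by simp
    have H2': "?H \<mu>2' = enn2ereal (integral\<^sup>N m (?F u2'))" using p2' a2' unfolding H_fm_def u2'_def by simp
    have "integral\<^sup>N m (?F u1') + integral\<^sup>N m (?F u2') = (\<integral>\<^sup>+x. ?F u1' x + ?F u2' x \<partial>m)"
      using M1' M2' by (simp add: nn_integral_add)
    also have "\<dots> \<le> (\<integral>\<^sup>+x. ?F u1 x + ?F u2 x \<partial>m)"
      using pt by (rule nn_integral_mono_AE)
    also have "\<dots> = integral\<^sup>N m (?F u1) + integral\<^sup>N m (?F u2)"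
      using M1 M2 by (simp add: nn_integral_add)
    finally have le: "integral\<^sup>N m (?F u1') + integral\<^sup>N m (?F u2') \<le> integral\<^sup>N m (?F u1) + integral\<^sup>N m (?F u2)" .
    show ?thesis
      unfolding H1 H2 H1' H2' plus_ennreal.rep_eq[symmetric]
      using le by (simp add: less_eq_ennreal.rep_eq)
  qed
qed

end
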